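(* For $n\ge2$, let $\sim$ be the equivalence relation on $B_n$ defined by $t\sim t'$ if and only if for every $p\in\{x_1,\dots,x_n\}$, $d_{G(t)}(p)=1\iff d_{G(t')}(p)=1$. Then $|B_n/{\sim}|=2^{n-2}$.
   Context: $B_n$ is the set of bracketings of size $n$: binary terms in which $x_1,\dots,x_n$ each occur exactly once, in this order. For $t\in B_n$, the rooted tree $G(t)$ is defined recursively: $G(x_i)$ is the single vertex $x_i$; $G(t_1t_2)$ is $G(t_1)\cup G(t_2)$ plus an edge from the leftmost variable of $t_1$ to the leftmost variable of $t_2$; it is rooted at $x_1$. $d_T(p)$ denotes the depth (distance from the root) of $p$ in $T$. *)

theory Defs
  imports Main
begin

datatype bterm = Var nat | App bterm bterm

fun leaves :: "bterm \<Rightarrow> nat list" where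
  "leaves (Var i) = [i]"
| "leaves (App t1 t2) = leaves t1 @ leaves t2"

fun leftmost :: "bterm \<Rightarrow> nat" where
  "leftmost (Var i) = i"
| "leftmost (App t1 t2) = leftmost t1"

text \<open>B_n: bracketings of size n, i.e. variables x_1..x_n each once, in order.\<close>
definition B :: "nat \<Rightarrow> bterm set" where
  "B n = {t. leaves t = [1..<n+1]}"

fun edges :: "bterm \<Rightarrow> (nat \<times> nat) set" where
  "edges (Var i) = {}"
| "edges (App t1 t2) = edges t1 \<union> edges t2 \<union> {(leftmost t1, leftmost t2)}"

definition verts :: "bterm \<Rightarrow> nat set" where
  "verts t = set (leaves t)"

fun walk :: "bterm \<Rightarrow> nat \<Rightarrow> nat \<Rightarrow> nat \<Rightarrow> bool" where
  "walk t 0 u v = (u = v \<and> u \<in> verts t)"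
| "walk t (Suc k) u v = (\<exists>w. ((u, w) \<in> edges t \<or> (w, u) \<in> edges t) \<and> walk t k w v)"

definition depth :: "bterm \<Rightarrow> nat \<Rightarrow> nat" where
  "depth t p = (LEAST k. walk t k 1 p)"

definition depth_equiv :: "nat \<Rightarrow> (bterm \<times> bterm) set" where
  "depth_equiv n = {(t, t'). t \<in> B n \<and> t' \<in> B n \<and>
     (\<forall>p \<in> {1..n}. depth t p = 1 \<longleftrightarrow> depth t' p = 1)}"

end

theory Submission
  imports Defs
begin

lemma leaves_ne: "leaves t \<noteq> []"
  by (induction t) auto

lemma leftmost_in: "leftmost t \<in> set (leaves t)"
  by (induction t) auto

lemma leftmost_hd: "leftmost t = hd (leaves t)"
  by (induction t) (auto simp: leaves_ne)

lemma edges_in: "(a, b) \<in> edges t \<Longrightarrow> a \<in> set (leaves t) \<and> b \<in> set (leaves t)"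
  by (induction t) (auto simp: leftmost_in)

definition nbL :: "bterm \<Rightarrow> nat set" where
  "nbL t = {q. (leftmost t, q) \<in> edges t \<or> (q, leftmost t) \<in> edges t}"

lemma nbL_sub: "nbL t \<subseteq> set (leaves t)"
  unfolding nbL_def using edges_in by blast

lemma nbL_App: "distinct (leaves (App t1 t2)) \<Longrightarrow> nbL (App t1 t2) = nbL t1 \<union> {leftmost t2}"
proof -
  assume d: "distinct (leaves (App t1 t2))"
  have "leftmost t1 \<notin> set (leaves t2)" using d leftmost_in[of t1] by auto
  then have "(leftmost t1, q) \<notin> edges t2 \<and> (q, leftmost t1) \<notin> edges t2" for q
    using edges_in by blast
  then show ?thesis unfolding nbL_def by auto
qed

lemma nbL_mono: "nbL t1 \<subseteq> nbL (App t1 t2)"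
  unfolding nbL_def by auto

lemma nbL_second: "length (leaves t) \<ge> 2 \<Longrightarrow> leaves t ! 1 \<in> nbL t"
proof (induction t)
  case (Var x)
  then show ?case by simp
next
  case (App t1 t2)
  show ?case
  proof (cases "length (leaves t1) = 1")
    case True
    then have "leaves (App t1 t2) ! 1 = hd (leaves t2)"
      using leaves_ne[of t2] by (cases "leaves t1"; cases "leaves t2") auto
    then show ?thesis unfolding nbL_def by (simp add: leftmost_hd[symmetric])
  next
    case False
    then have "length (leaves t1) \<ge> 2" using leaves_ne[of t1]
      by (cases "leaves t1") (auto simp: Suc_le_eq)
    then have "leaves (App t1 t2) ! 1 = leaves t1 ! 1" by (simp add: nth_append)
    then show ?thesis using App.IH(1) \<open>length (leaves t1) \<ge> 2\<close> nbL_mono by auto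
  qed
qed

lemma walk1: "walk t (Suc 0) u p \<longleftrightarrow> ((u, p) \<in> edges t \<or> (p, u) \<in> edges t)"
  by (auto simp: verts_def dest: edges_in)

lemma walk_mono: "edges t \<subseteq> edges t' \<Longrightarrow> verts t \<subseteq> verts t' \<Longrightarrow> walk t k u v \<Longrightarrow> walk t' k u v"
  by (induction k arbitrary: u) auto

lemma conn: "p \<in> set (leaves t) \<Longrightarrow> \<exists>k. walk t k (leftmost t) p"
proof (induction t arbitrary: p)
  case (Var x)
  then show ?case by (intro exI[of _ 0]) (simp add: verts_def)
next
  case (App t1 t2)
  have m1: "edges t1 \<subseteq> edges (App t1 t2)" "verts t1 \<subseteq> verts (App t1 t2)"
    and m2: "edges t2 \<subseteq> edges (App t1 t2)" "verts t2 \<subseteq> verts (App t1 t2)"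
    by (auto simp: verts_def)
  show ?case
  proof (cases "p \<in> set (leaves t1)")
    case True
    then obtain k where "walk t1 k (leftmost t1) p" using App.IH(1) by blast
    then show ?thesis using walk_mono[OF m1] by auto
  next
    case False
    then have "p \<in> set (leaves t2)" using App.prems by auto
    then obtain k where "walk t2 k (leftmost t2) p" using App.IH(2) by blast
    then have "walk (App t1 t2) k (leftmost t2) p" using walk_mono[OF m2] by auto
    then have "walk (App t1 t2) (Suc k) (leftmost t1) p" 
      unfolding walk.simps(2) by (intro exI[of _ "leftmost t2"]) simp
    then show ?thesis by (metis leftmost.simps(2))
  qed
qed

lemma depth1:
  assumes "t \<in> B n" "p \<in> {1..n}"
  shows "depth t p = 1 \<longleftrightarrow> p \<in> nbL t - {1}"
proof -
  have lv: "leaves t = [1..<n+1]" using assms by (simp add: B_def)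
  then have "n \<noteq> 0" using leaves_ne[of t] by (auto simp del: upt_Suc)
  then have lm: "leftmost t = 1" using lv by (simp add: leftmost_hd upt_conv_Cons del: upt_Suc)
  have w1: "walk t (Suc 0) 1 p \<longleftrightarrow> p \<in> nbL t" using lm walk1 by (simp add: nbL_def)
  show ?thesis
  proof
    assume "depth t p = 1"
    then have e: "(LEAST k. walk t k 1 p) = 1" by (simp add: depth_def)
    have "walk t 1 1 p"
    proof (rule ccontr)
      assume "\<not> walk t 1 1 p"
      moreover have "\<exists>k. walk t k 1 p" using conn[of p t] lm lv assms(2) by (simp del: upt_Suc)
      ultimately show False using e LeastI_ex[of "\<lambda>k. walk t k 1 p"] by auto
    qed
    moreover have "\<not> walk t 0 1 p" using e Least_le[of "\<lambda>k. walk t k 1 p" 0] by auto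
    ultimately show "p \<in> nbL t - {1}" using w1 assms by (auto simp: verts_def B_def)
  next
    assume "p \<in> nbL t - {1}"
    then have "walk t 1 1 p" "\<not> walk t 0 1 p" using w1 by auto
    then have "(LEAST k. walk t k 1 p) = 1"
      by (intro Least_equality) (auto simp: Suc_le_eq intro: Nat.gr0I)
    then show "depth t p = 1" by (simp add: depth_def)
  qed
qed

lemma leaves_B: "t \<in> B n \<Longrightarrow> set (leaves t) = {1..n}"
  by (auto simp: B_def)

lemma equiv_eq: "depth_equiv n = {(t, t'). t \<in> B n \<and> t' \<in> B n \<and> nbL t - {1} = nbL t' - {1}}"
proof -
  have "(\<forall>p \<in> {1..n}. depth t p = 1 \<longleftrightarrow> depth t' p = 1) \<longleftrightarrow> nbL t - {1} = nbL t' - {1}"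
    if "t \<in> B n" "t' \<in> B n" for t t'
  proof -
    have "nbL t \<subseteq> {1..n}" "nbL t' \<subseteq> {1..n}" using nbL_sub leaves_B that by blast+
    moreover have "(\<forall>p \<in> {1..n}. depth t p = 1 \<longleftrightarrow> depth t' p = 1) \<longleftrightarrow>
       (\<forall>p \<in> {1..n}. p \<in> nbL t - {1} \<longleftrightarrow> p \<in> nbL t' - {1})"
      using depth1 that by blast
    ultimately show ?thesis by blast
  qed
  then show ?thesis unfolding depth_equiv_def by auto
qed

lemma card_quot_kernel:
  "card (A // {(x, y). x \<in> A \<and> y \<in> A \<and> f x = f y}) = card (f ` A)"
proof -
  let ?g = "\<lambda>v. {y \<in> A. f y = v}"
  have "A // {(x, y). x \<in> A \<and> y \<in> A \<and> f x = f y} = ?g ` (f ` A)"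
  proof
    show "A // {(x, y). x \<in> A \<and> y \<in> A \<and> f x = f y} \<subseteq> ?g ` (f ` A)"
    proof
      fix X assume "X \<in> A // {(x, y). x \<in> A \<and> y \<in> A \<and> f x = f y}"
      then obtain x where "x \<in> A" "X = {(x, y). x \<in> A \<and> y \<in> A \<and> f x = f y} `` {x}"
        unfolding quotient_def by blast
      then have "X = ?g (f x)" by auto
      then show "X \<in> ?g ` (f ` A)" using \<open>x \<in> A\<close> by blast
    qed
  next
    show "?g ` (f ` A) \<subseteq> A // {(x, y). x \<in> A \<and> y \<in> A \<and> f x = f y}"
    proof
      fix X assume "X \<in> ?g ` (f ` A)"
      then obtain x where "x \<in> A" "X = ?g (f x)" by blast
      then have "X = {(x, y). x \<in> A \<and> y \<in> A \<and> f x = f y} `` {x}" by auto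
      then show "X \<in> A // {(x, y). x \<in> A \<and> y \<in> A \<and> f x = f y}"
        unfolding quotient_def using \<open>x \<in> A\<close> by blast
    qed
  qed
  moreover have "inj_on ?g (f ` A)" by (rule inj_onI) blast
  ultimately show ?thesis by (simp add: card_image)
qed

lemma construct:
  "n \<ge> 1 \<Longrightarrow> S \<subseteq> {2..n} \<Longrightarrow> (2 \<le> n \<longrightarrow> 2 \<in> S) \<Longrightarrow>
   \<exists>t. leaves t = [1..<n+1] \<and> nbL t = S"
proof (induction n arbitrary: S)
  case 0
  then show ?case by simp
next
  case (Suc n)
  show ?case
  proof (cases "n = 0")
    case True
    then have "S = {}" using Suc.prems by auto
    then show ?thesis using True by (intro exI[of _ "Var 1"]) (simp add: nbL_def)
  next
    case False
    show ?thesis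
    proof (cases "Suc n \<in> S")
      case True
      have "S - {Suc n} \<subseteq> {2..n}" using Suc.prems by auto
      moreover have "2 \<le> n \<longrightarrow> 2 \<in> S - {Suc n}" using Suc.prems by auto
      moreover have "n \<ge> 1" using False by simp
      ultimately have "\<exists>t. leaves t = [1..<n+1] \<and> nbL t = S - {Suc n}"
        using Suc.IH[of "S - {Suc n}"] by blast
      then obtain t' where t': "leaves t' = [1..<n+1]" "nbL t' = S - {Suc n}" by blast
      let ?t = "App t' (Var (Suc n))"
      have "distinct (leaves ?t)" using t' by simp
      then have "nbL ?t = S" using nbL_App[of t' "Var (Suc n)"] t' True by auto
      moreover have "leaves ?t = [1..<Suc n + 1]" using t' by simp
      ultimately show ?thesis by blast
    next
      case nin: False
      have n2: "n \<ge> 2" using False nin Suc.prems by (cases "n = 1") (auto simp: numeral_2_eq_2)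
      have "S \<subseteq> {2..Suc n} - {Suc n}" using Suc.prems nin by blast
      also have "{2..Suc n} - {Suc n} = {2..n}" by auto
      finally have "S \<subseteq> {2..n}" .
      moreover have "n \<ge> 1" using False by simp
      moreover have "2 \<le> n \<longrightarrow> 2 \<in> S" using Suc.prems by auto
      ultimately have "\<exists>t. leaves t = [1..<n+1] \<and> nbL t = S"
        using Suc.IH[of S] by blast
      then obtain t' where t': "leaves t' = [1..<n+1]" "nbL t' = S" by blast
      have "length (leaves t') \<ge> 2" using t' n2 by (simp del: upt_Suc)
      then obtain t1 t2 where tt: "t' = App t1 t2" by (cases t') auto
      let ?t = "App t1 (App t2 (Var (Suc n)))"
      have lt: "leaves ?t = [1..<Suc n + 1]" using t' tt by simp
      then have "distinct (leaves ?t)" by (simp del: upt_Suc)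
      then have "nbL ?t = nbL t1 \<union> {leftmost t2}"
        using nbL_App[of t1 "App t2 (Var (Suc n))"] by simp
      also have "\<dots> = S"
      proof -
        have "distinct (leaves t')" using t'(1) by (simp del: upt_Suc)
        then show ?thesis using nbL_App[of t1 t2] t'(2) tt by simp
      qed
      finally show ?thesis using lt by blast
    qed
  qed
qed

lemma image_eq:
  assumes "n \<ge> 2"
  shows "(\<lambda>t. nbL t - {1}) ` B n = {S. 2 \<in> S \<and> S \<subseteq> {2..n}}"
proof
  show "(\<lambda>t. nbL t - {1}) ` B n \<subseteq> {S. 2 \<in> S \<and> S \<subseteq> {2..n}}"
  proof
    fix S assume "S \<in> (\<lambda>t. nbL t - {1}) ` B n"
    then obtain t where t: "t \<in> B n" "S = nbL t - {1}" by blast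
    have "nbL t \<subseteq> {1..n}" using t(1) nbL_sub[of t] leaves_B[of t n] by blast
    then have "S \<subseteq> {2..n}" using t(2) by auto
    have lv: "leaves t = [1..<n+1]" using t(1) by (simp add: B_def)
    moreover have "leaves t ! 1 \<in> nbL t" using lv assms by (intro nbL_second) (simp del: upt_Suc)
    moreover have "leaves t ! 1 = 2" using lv assms by (simp add: nth_upt del: upt_Suc)
    ultimately show "S \<in> {S. 2 \<in> S \<and> S \<subseteq> {2..n}}" using t \<open>S \<subseteq> {2..n}\<close> by auto
  qed
next
  show "{S. 2 \<in> S \<and> S \<subseteq> {2..n}} \<subseteq> (\<lambda>t. nbL t - {1}) ` B n"
  proof
    fix S assume S: "S \<in> {S. 2 \<in> S \<and> S \<subseteq> {2..n}}"
    have "n \<ge> 1" using assms by simp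
    moreover have "S \<subseteq> {2..n}" "2 \<le> n \<longrightarrow> 2 \<in> S" using S by auto
    ultimately obtain t where lt: "leaves t = [1..<n+1]" and nt: "nbL t = S"
      using construct[of n S] by blast
    have "1 \<notin> S" using S by auto
    then have "S = nbL t - {1}" using nt by blast
    moreover have "t \<in> B n" using lt unfolding B_def by blast
    ultimately show "S \<in> (\<lambda>t. nbL t - {1}) ` B n" by blast
  qed
qed

lemma card_sets:
  assumes "n \<ge> 2"
  shows "card {S. 2 \<in> S \<and> S \<subseteq> {2..n}} = 2 ^ (n - 2)"
proof -
  have "{S. 2 \<in> S \<and> S \<subseteq> {2..n}} = insert 2 ` Pow {3..n}"
  proof
    show "{S. 2 \<in> S \<and> S \<subseteq> {2..n}} \<subseteq> insert 2 ` Pow {3..n}"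
    proof
      fix S assume S: "S \<in> {S. 2 \<in> S \<and> S \<subseteq> {2..n}}"
      then have "S = insert 2 (S - {2})" "S - {2} \<in> Pow {3..n}" by auto
      then show "S \<in> insert 2 ` Pow {3..n}" by blast
    qed
  qed (use assms in auto)
  moreover have "inj_on (insert 2) (Pow {3..n})"
  proof (rule inj_onI)
    fix A C assume "A \<in> Pow {3..n}" "C \<in> Pow {3..n}" "insert 2 A = insert (2::nat) C"
    moreover have "(2::nat) \<notin> {3..n}" by simp
    ultimately have "2 \<notin> A" "2 \<notin> C" by blast+
    then show "A = C" using \<open>insert 2 A = insert 2 C\<close> by (metis Diff_insert_absorb)
  qed
  ultimately show ?thesis by (simp add: card_image card_Pow)
qed

theorem lemma8p5:
  fixes n :: nat
  assumes "n \<ge> 2"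
  shows "card (B n // depth_equiv n) = 2 ^ (n - 2)"
  using card_quot_kernel[of "B n" "\<lambda>t. nbL t - {1}"] image_eq[OF assms] card_sets[OF assms]
  by (simp add: equiv_eq)

end
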